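(* Let $k\in\mathbb{N}$. There exists an almost law $(w_n)_n$ for $\mathrm{SU}(k)$ and a constant $C>0$ such that $$L_k(w_n)\le\exp\left(-C\cdot\ell(w_n)^{\log_2(\varphi)}\right)\quad\text{for all } n,$$ where $\varphi$ is the golden ratio.
   Context: $\mathbb{F}_2$ is the free group on two generators, $\ell$ the word length with respect to the free generators and their inverses. For $w\in\mathbb{F}_2$, the word map $w\colon\mathrm{SU}(k)\times\mathrm{SU}(k)\to\mathrm{SU}(k)$ is given by evaluation. On $\mathrm{SU}(k)$ use the metric $d(u,v)=\|u-v\|$ with $\|\cdot\|$ the operator norm, and set $L_k(w):=\max\{d(1_k,w(u,v))\mid u,v\in\mathrm{SU}(k)\}$. An almost law for $\mathrm{SU}(k)$ is a sequence $(w_n)$ of non-trivial elements of $\mathbb{F}_2$ such that for every neighbourhood $U$ of the identity in $\mathrm{SU}(k)$ there is $N$ with $w_n(\mathrm{SU}(k)\times\mathrm{SU}(k))\subset U$ for all $n\ge N$. *)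

theory Defs
  imports "HOL-Analysis.Analysis"
begin

text \<open>Elements of the free group F_2 on generators a, b are represented by their
  unique reduced words.  A letter is a pair (g, e): g = False means a, g = True means b;
  e = True means the inverse of that generator.\<close>

type_synonym letter = "bool \<times> bool"

definition inverse_letters :: "letter \<Rightarrow> letter \<Rightarrow> bool" where
  "inverse_letters x y \<longleftrightarrow> fst x = fst y \<and> snd x \<noteq> snd y"

definition reduced_word :: "letter list \<Rightarrow> bool" where
  "reduced_word w \<longleftrightarrow> (\<forall>i. Suc i < length w \<longrightarrow> \<not> inverse_letters (w ! i) (w ! Suc i))"

definition word_length :: "letter list \<Rightarrow> nat" where
  "word_length w = length w"

text \<open>Conjugate transpose, SU(k) as a set of k x k complex matrices (k = CARD('n)).\<close>
definition adjoint_mat :: "complex^'n^'n \<Rightarrow> complex^'n^'n" where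
  "adjoint_mat A = (\<chi> i j. cnj (A $ j $ i))"

definition SU :: "'n::finite itself \<Rightarrow> (complex^'n^'n) set" where
  "SU _ = {A. A ** adjoint_mat A = mat 1 \<and> adjoint_mat A ** A = mat 1 \<and> det A = 1}"

definition op_norm :: "complex^'n^'n \<Rightarrow> real" where
  "op_norm A = onorm (\<lambda>x. A *v x)"

definition dSU :: "complex^'n^'n \<Rightarrow> complex^'n^'n \<Rightarrow> real" where
  "dSU A B = op_norm (A - B)"

definition eval_letter :: "complex^'n^'n \<Rightarrow> complex^'n^'n \<Rightarrow> letter \<Rightarrow> complex^'n^'n" where
  "eval_letter u v l = (let g = (if fst l then v else u) in if snd l then matrix_inv g else g)"

definition word_map :: "letter list \<Rightarrow> complex^'n^'n \<Rightarrow> complex^'n^'n \<Rightarrow> complex^'n^'n" where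
  "word_map w u v = foldr (\<lambda>l acc. eval_letter u v l ** acc) w (mat 1)"

definition L_SU :: "'n::finite itself \<Rightarrow> letter list \<Rightarrow> real" where
  "L_SU T w = (SUP p \<in> SU T \<times> SU T. dSU (mat 1) (word_map w (fst p) (snd p)))"

definition almost_law :: "'n::finite itself \<Rightarrow> (nat \<Rightarrow> letter list) \<Rightarrow> bool" where
  "almost_law T ws \<longleftrightarrow>
     (\<forall>n. reduced_word (ws n) \<and> ws n \<noteq> []) \<and>
     (\<forall>\<epsilon>>0. \<exists>N. \<forall>n\<ge>N. \<forall>u\<in>SU T. \<forall>v\<in>SU T. dSU (mat 1) (word_map (ws n) u v) < \<epsilon>)"

definition golden_ratio :: real where
  "golden_ratio = (1 + sqrt 5) / 2"

end

theory Submission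
  imports Defs
begin


lemma opn_bl: "bounded_linear (\<lambda>x. (A::complex^'n^'m) *v x)"
  by simp

lemma opn_ge0: "op_norm A \<ge> 0"
  unfolding op_norm_def by (rule onorm_pos_le) simp

lemma opn_mul: "op_norm ((A::complex^'n^'n) ** B) \<le> op_norm A * op_norm B"
proof -
  have "(\<lambda>x. (A ** B) *v x) = (\<lambda>x. A *v x) \<circ> (\<lambda>x. B *v x)"
    by (auto simp: matrix_vector_mul_assoc)
  then show ?thesis unfolding op_norm_def
    by (metis onorm_compose opn_bl)
qed

lemma opn_add: "op_norm ((A::complex^'n^'n) + B) \<le> op_norm A + op_norm B"
proof -
  have "(\<lambda>x. (A + B) *v x) = (\<lambda>x. A *v x + B *v x)"
    by (auto simp: matrix_vector_mult_add_rdistrib)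
  then show ?thesis unfolding op_norm_def
    by (metis onorm_triangle opn_bl)
qed

lemma opn_neg: "op_norm (- (A::complex^'n^'n)) = op_norm A"
proof -
  have "(\<lambda>x. (- A) *v x) = (\<lambda>x. - (A *v x))"
    by (auto simp: vec_eq_iff matrix_vector_mult_def sum_negf)
  then show ?thesis unfolding op_norm_def
    by (metis onorm_neg)
qed

lemma opn_diff: "op_norm ((A::complex^'n^'n) - B) \<le> op_norm A + op_norm B"
  using opn_add[of A "-B"] by (simp add: opn_neg)

lemma opn_one: "op_norm (mat 1 :: complex^'n^'n) \<le> 1"
proof -
  have e: "((*v) (mat 1 :: complex^'n^'n)) = (\<lambda>x. x)" by (rule ext) simp
  show ?thesis unfolding op_norm_def e by (rule onorm_id_le)
qed

lemma cmod_sq_c: "(complex_of_real (cmod z))^2 = z * cnj z"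
  by (simp only: of_real_power[symmetric] complex_norm_square)

lemma norm_sq_cvec: "complex_of_real ((norm (x::complex^'n))^2) = (\<Sum>i\<in>UNIV. x$i * cnj (x$i))"
proof -
  have "(norm x)^2 = (\<Sum>i\<in>UNIV. (cmod (x$i))^2)"
    unfolding norm_vec_def L2_set_def by (simp add: sum_nonneg)
  then show ?thesis by (simp add: cmod_sq_c)
qed

lemma unitary_norm:
  fixes U :: "complex^'n^'n"
  assumes "adjoint_mat U ** U = mat 1"
  shows "norm (U *v x) = norm x"
proof -
  have h: "(\<Sum>i\<in>UNIV. cnj (U$i$l) * U$i$j) = (if l = j then 1 else 0)" for l j
    using assms by (auto simp: vec_eq_iff matrix_matrix_mult_def adjoint_mat_def mat_def)
  have "(\<Sum>i\<in>UNIV. (U *v x)$i * cnj ((U *v x)$i))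
     = (\<Sum>i\<in>UNIV. (\<Sum>j\<in>UNIV. U$i$j * x$j) * (\<Sum>l\<in>UNIV. cnj (U$i$l) * cnj (x$l)))"
    by (simp add: matrix_vector_mult_def cnj_sum)
  also have "\<dots> = (\<Sum>i\<in>UNIV. \<Sum>j\<in>UNIV. \<Sum>l\<in>UNIV. (x$j * cnj (x$l)) * (cnj (U$i$l) * U$i$j))"
    by (simp add: sum_product mult_ac)
  also have "\<dots> = (\<Sum>j\<in>UNIV. \<Sum>l\<in>UNIV. (x$j * cnj (x$l)) * (\<Sum>i\<in>UNIV. cnj (U$i$l) * U$i$j))"
    by (simp add: sum_distrib_left, subst sum.swap, rule sum.cong[OF refl], rule sum.swap)
  also have "\<dots> = (\<Sum>j\<in>UNIV. x$j * cnj (x$j))"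
    by (simp add: h if_distrib cong: if_cong)
  finally have "complex_of_real ((norm (U *v x))^2) = complex_of_real ((norm x)^2)"
    by (simp only: norm_sq_cvec)
  then have "(norm (U *v x))^2 = (norm x)^2" using of_real_eq_iff by blast
  then show ?thesis by (simp add: power2_eq_iff_nonneg)
qed

lemma opn_unitary:
  fixes U :: "complex^'n^'n"
  assumes "adjoint_mat U ** U = mat 1"
  shows "op_norm U \<le> 1"
  unfolding op_norm_def
  by (rule onorm_le) (simp add: unitary_norm[OF assms])



lemma mm_diff_l: "(A::'a::ring_1^'n^'m) ** (B - C) = A ** B - A ** C"
  by (simp add: vec_eq_iff matrix_matrix_mult_def sum_subtractf algebra_simps)
lemma mm_diff_r: "((A::'a::ring_1^'n^'m) - B) ** C = A ** C - B ** C"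
  by (simp add: vec_eq_iff matrix_matrix_mult_def sum_subtractf algebra_simps)
lemma mm_add_r: "((A::'a::ring_1^'n^'m) + B) ** C = A ** C + B ** C"
  by (simp add: vec_eq_iff matrix_matrix_mult_def sum.distrib algebra_simps)

lemma adj_adj[simp]: "adjoint_mat (adjoint_mat A) = A"
  by (simp add: adjoint_mat_def vec_eq_iff)
lemma adj_mul: "adjoint_mat ((A::complex^'n^'n) ** B) = adjoint_mat B ** adjoint_mat A"
  by (simp add: adjoint_mat_def vec_eq_iff matrix_matrix_mult_def cnj_sum mult.commute)
lemma adj_one[simp]: "adjoint_mat (mat 1 :: complex^'n^'n) = mat 1"
  by (simp add: adjoint_mat_def vec_eq_iff mat_def)

definition unit_m :: "complex^'n^'n \<Rightarrow> bool" where
  "unit_m A \<longleftrightarrow> A ** adjoint_mat A = mat 1 \<and> adjoint_mat A ** A = mat 1"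

lemma unit_one[simp]: "unit_m (mat 1)" by (simp add: unit_m_def)
lemma unit_adj: "unit_m A \<Longrightarrow> unit_m (adjoint_mat A)" by (auto simp: unit_m_def)
lemma unit_mul: "unit_m A \<Longrightarrow> unit_m B \<Longrightarrow> unit_m (A ** B)"
proof -
  assume a: "unit_m A" and b: "unit_m B"
  have "(A ** B) ** adjoint_mat (A ** B) = A ** (B ** adjoint_mat B) ** adjoint_mat A"
    by (simp add: adj_mul matrix_mul_assoc)
  also have "\<dots> = mat 1" using a b by (simp add: unit_m_def)
  finally have 1: "(A ** B) ** adjoint_mat (A ** B) = mat 1" .
  have "adjoint_mat (A ** B) ** (A ** B) = adjoint_mat B ** (adjoint_mat A ** A) ** B"
    by (simp add: adj_mul matrix_mul_assoc)
  also have "\<dots> = mat 1" using a b by (simp add: unit_m_def)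
  finally show ?thesis using 1 by (simp add: unit_m_def)
qed

lemma SU_unit: "A \<in> SU T \<Longrightarrow> unit_m A"
  by (simp add: SU_def unit_m_def)

lemma unit_inv: "unit_m A \<Longrightarrow> matrix_inv A = adjoint_mat A"
proof -
  assume a: "unit_m A"
  have ex: "\<exists>A'. A ** A' = mat 1 \<and> A' ** A = mat 1" using a unfolding unit_m_def by blast
  define B where "B = matrix_inv A"
  have B: "A ** B = mat 1 \<and> B ** A = mat 1"
    unfolding B_def matrix_inv_def by (rule someI_ex[OF ex])
  have "B = (adjoint_mat A ** A) ** B" using a by (simp add: unit_m_def)
  also have "\<dots> = adjoint_mat A" using B by (simp add: matrix_mul_assoc[symmetric])
  finally show ?thesis by (simp add: B_def)
qed

definition ee :: "complex^'n^'n \<Rightarrow> real" where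
  "ee A = op_norm (mat 1 - A)"

lemma ee_ge0: "ee A \<ge> 0" by (simp add: ee_def opn_ge0)

lemma opn_unit: "unit_m A \<Longrightarrow> op_norm A \<le> 1"
  by (simp add: unit_m_def opn_unitary)

lemma ee_le2: fixes A :: "complex^'n^'n" shows "unit_m A \<Longrightarrow> ee A \<le> 2"
  unfolding ee_def using opn_diff[of "mat 1" A] opn_one[where 'n='n] opn_unit[of A] by linarith

lemma ee_adj: assumes "unit_m X" shows "ee (adjoint_mat X) \<le> ee X"
proof -
  have "mat 1 - adjoint_mat X = adjoint_mat X ** (X - mat 1)"
    using assms by (simp add: mm_diff_l unit_m_def)
  also have "X - mat 1 = - (mat 1 - X)" by simp
  finally have eq: "mat 1 - adjoint_mat X = adjoint_mat X ** (- (mat 1 - X))" .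
  have "op_norm (mat 1 - adjoint_mat X) \<le> op_norm (adjoint_mat X) * op_norm (- (mat 1 - X))"
    unfolding eq by (rule opn_mul)
  also have "\<dots> \<le> 1 * op_norm (mat 1 - X)"
    unfolding opn_neg by (rule mult_right_mono) (use opn_unit[OF unit_adj[OF assms]] opn_ge0 in auto)
  finally show ?thesis by (simp add: ee_def)
qed

lemma ee_mul: assumes "unit_m X" "unit_m Y" shows "ee (X ** Y) \<le> ee X + ee Y"
proof -
  have "mat 1 - X ** Y = (mat 1 - X) + X ** (mat 1 - Y)"
    by (simp add: mm_diff_l)
  then have "op_norm (mat 1 - X ** Y) \<le> op_norm (mat 1 - X) + op_norm (X ** (mat 1 - Y))"
    by (simp only: opn_add)
  also have "\<dots> \<le> op_norm (mat 1 - X) + op_norm X * op_norm (mat 1 - Y)"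
    using opn_mul[of X "mat 1 - Y"] by linarith
  also have "\<dots> \<le> op_norm (mat 1 - X) + 1 * op_norm (mat 1 - Y)"
    using mult_right_mono[OF opn_unit[OF assms(1)] opn_ge0[of "mat 1 - Y"]] by simp
  finally show ?thesis by (simp add: ee_def)
qed

lemma ee_comm: assumes X: "unit_m X" and Y: "unit_m Y"
  shows "ee (X ** (Y ** (adjoint_mat X ** adjoint_mat Y))) \<le> 2 * ee X * ee Y"
proof -
  define P where "P = mat 1 - X"
  define Q where "Q = mat 1 - Y"
  have XP: "X = mat 1 - P" and YQ: "Y = mat 1 - Q" by (simp_all add: P_def Q_def)
  have 1: "(Y ** X) ** (adjoint_mat X ** adjoint_mat Y) = mat 1"
  proof -
    have "(Y ** X) ** (adjoint_mat X ** adjoint_mat Y) = Y ** (X ** adjoint_mat X) ** adjoint_mat Y"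
      by (simp add: matrix_mul_assoc)
    then show ?thesis using X Y by (simp add: unit_m_def)
  qed
  have 2: "X ** (Y ** (adjoint_mat X ** adjoint_mat Y)) = (X ** Y) ** (adjoint_mat X ** adjoint_mat Y)"
    by (simp add: matrix_mul_assoc)
  have 3: "Y ** X - X ** Y = Q ** P - P ** Q"
  proof -
    have a: "(mat 1 - Q) ** (mat 1 - P) = mat 1 - P - Q + Q ** P"
      by (simp add: mm_diff_l mm_diff_r)
    have b: "(mat 1 - P) ** (mat 1 - Q) = mat 1 - P - Q + P ** Q"
      by (simp add: mm_diff_l mm_diff_r)
    show ?thesis unfolding XP YQ a b by simp
  qed
  have "mat 1 - X ** (Y ** (adjoint_mat X ** adjoint_mat Y))
      = (Y ** X - X ** Y) ** (adjoint_mat X ** adjoint_mat Y)"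
    by (simp only: 2 mm_diff_r 1)
  also have "\<dots> = (Q ** P - P ** Q) ** (adjoint_mat X ** adjoint_mat Y)" by (simp only: 3)
  finally have eq: "mat 1 - X ** (Y ** (adjoint_mat X ** adjoint_mat Y)) = (Q ** P - P ** Q) ** (adjoint_mat X ** adjoint_mat Y)" .
  have u: "op_norm (adjoint_mat X ** adjoint_mat Y) \<le> 1"
    using opn_unit unit_mul unit_adj X Y by blast
  have "op_norm ((Q ** P - P ** Q) ** (adjoint_mat X ** adjoint_mat Y)) \<le> op_norm (Q ** P - P ** Q) * 1"
    using opn_mul[of "Q ** P - P ** Q" "adjoint_mat X ** adjoint_mat Y"] u opn_ge0
    by (meson mult_left_mono order_trans)
  also have "\<dots> \<le> op_norm Q * op_norm P + op_norm P * op_norm Q"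
    using opn_diff[of "Q ** P" "P ** Q"] opn_mul[of Q P] opn_mul[of P Q] by linarith
  finally show ?thesis unfolding ee_def eq P_def[symmetric] Q_def[symmetric] by (simp add: algebra_simps)
qed



definition fl :: "letter \<Rightarrow> letter" where "fl l = (fst l, \<not> snd l)"
definition winv :: "letter list \<Rightarrow> letter list" where "winv w = rev (map fl w)"
definition commw :: "letter list \<Rightarrow> letter list \<Rightarrow> letter list" where
  "commw X Y = X @ Y @ winv X @ winv Y"

lemma fl_fl[simp]: "fl (fl l) = l" by (simp add: fl_def)
lemma inv_fl[simp]: "inverse_letters (fl a) (fl b) = inverse_letters a b"
  by (auto simp: fl_def inverse_letters_def)
lemma inv_sym: "inverse_letters a b = inverse_letters b a"
  by (auto simp: inverse_letters_def)

lemma winv_Nil[simp]: "winv [] = []" by (simp add: winv_def)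
lemma winv_Cons: "winv (x # w) = winv w @ [fl x]" by (simp add: winv_def)
lemma winv_append: "winv (xs @ ys) = winv ys @ winv xs" by (simp add: winv_def)
lemma winv_eq_Nil[simp]: "winv w = [] \<longleftrightarrow> w = []" by (simp add: winv_def)
lemma length_winv[simp]: "length (winv w) = length w" by (simp add: winv_def)
lemma hd_winv: "w \<noteq> [] \<Longrightarrow> hd (winv w) = fl (last w)"
  by (simp add: winv_def hd_rev last_map)
lemma last_winv: "w \<noteq> [] \<Longrightarrow> last (winv w) = fl (hd w)"
  by (simp add: winv_def last_rev hd_map)

lemma red_Nil[simp]: "reduced_word []" by (simp add: reduced_word_def)
lemma red_Cons: "reduced_word (x # xs) \<longleftrightarrow> reduced_word xs \<and> (xs \<noteq> [] \<longrightarrow> \<not> inverse_letters x (hd xs))"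
proof
  assume a: "reduced_word (x # xs)"
  have "reduced_word xs" unfolding reduced_word_def
  proof (intro allI impI)
    fix i assume "Suc i < length xs"
    then show "\<not> inverse_letters (xs ! i) (xs ! Suc i)"
      using a[unfolded reduced_word_def, rule_format, of "Suc i"] by simp
  qed
  moreover have "xs \<noteq> [] \<longrightarrow> \<not> inverse_letters x (hd xs)"
    using a[unfolded reduced_word_def, rule_format, of 0] by (cases xs) auto
  ultimately show "reduced_word xs \<and> (xs \<noteq> [] \<longrightarrow> \<not> inverse_letters x (hd xs))" by blast
next
  assume a: "reduced_word xs \<and> (xs \<noteq> [] \<longrightarrow> \<not> inverse_letters x (hd xs))"
  show "reduced_word (x # xs)" unfolding reduced_word_def
  proof (intro allI impI)
    fix i assume i: "Suc i < length (x # xs)"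
    show "\<not> inverse_letters ((x # xs) ! i) ((x # xs) ! Suc i)"
    proof (cases i)
      case 0 then show ?thesis using a i by (cases xs) auto
    next
      case (Suc j) then show ?thesis using a i unfolding reduced_word_def by auto
    qed
  qed
qed

lemma red_append: "reduced_word (xs @ ys) \<longleftrightarrow> reduced_word xs \<and> reduced_word ys \<and>
   (xs \<noteq> [] \<longrightarrow> ys \<noteq> [] \<longrightarrow> \<not> inverse_letters (last xs) (hd ys))"
proof (induction xs)
  case Nil then show ?case by simp
next
  case (Cons x xs) then show ?case
    by (cases xs; cases ys) (auto simp: red_Cons)
qed

lemma red_winv: "reduced_word w \<Longrightarrow> reduced_word (winv w)"
proof (induction w)
  case Nil then show ?case by simp
next
  case (Cons x w)
  then show ?case
    by (auto simp: winv_Cons red_append red_Cons last_winv inv_sym)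
qed

lemma red_replicate: "reduced_word (replicate m l)"
  by (induction m) (auto simp: red_Cons inverse_letters_def)

lemma red_commw:
  assumes "reduced_word X" "reduced_word Y" "X \<noteq> []" "Y \<noteq> []"
    "\<not> inverse_letters (last X) (hd Y)" "last Y \<noteq> last X" "\<not> inverse_letters (hd X) (last Y)"
  shows "reduced_word (commw X Y)" "commw X Y \<noteq> []" "hd (commw X Y) = hd X" "last (commw X Y) = fl (hd Y)"
proof -
  have i1: "\<not> inverse_letters (last Y) (fl (last X))"
    using assms(6) by (auto simp: inverse_letters_def fl_def prod_eq_iff)
  have i2: "\<not> inverse_letters (fl (hd X)) (fl (last Y))" using assms(7) by simp
  show "reduced_word (commw X Y)" unfolding commw_def
    using assms i1 i2 red_winv[OF assms(1)] red_winv[OF assms(2)]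
    by (simp add: red_append hd_winv last_winv)
  show "commw X Y \<noteq> []" using assms(3) by (simp add: commw_def)
  show "hd (commw X Y) = hd X" using assms(3) by (simp add: commw_def)
  show "last (commw X Y) = fl (hd Y)" using assms(4) by (simp add: commw_def last_winv)
qed

lemma length_commw: "length (commw X Y) = 2 * length X + 2 * length Y"
  by (simp add: commw_def)

lemma eval_unit: "unit_m u \<Longrightarrow> unit_m v \<Longrightarrow> unit_m (eval_letter u v l)"
  by (auto simp: eval_letter_def Let_def unit_inv unit_adj)

lemma eval_fl: "unit_m u \<Longrightarrow> unit_m v \<Longrightarrow> eval_letter u v (fl l) = adjoint_mat (eval_letter u v l)"
  by (auto simp: eval_letter_def Let_def unit_inv fl_def)

lemma wm_Nil[simp]: "word_map [] u v = mat 1" by (simp add: word_map_def)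
lemma wm_Cons: "word_map (x # w) u v = eval_letter u v x ** word_map w u v"
  by (simp add: word_map_def)
lemma wm_append: "word_map (xs @ ys) u v = word_map xs u v ** word_map ys u v"
  by (induction xs) (simp_all add: wm_Cons matrix_mul_assoc)

lemma wm_unit: "unit_m u \<Longrightarrow> unit_m v \<Longrightarrow> unit_m (word_map w u v)"
  by (induction w) (simp_all add: wm_Cons unit_mul eval_unit)

lemma wm_winv: "unit_m u \<Longrightarrow> unit_m v \<Longrightarrow> word_map (winv w) u v = adjoint_mat (word_map w u v)"
  by (induction w) (simp_all add: winv_Cons wm_append wm_Cons eval_fl adj_mul)

lemma wm_commw: "unit_m u \<Longrightarrow> unit_m v \<Longrightarrow> word_map (commw X Y) u v =
   word_map X u v ** (word_map Y u v ** (adjoint_mat (word_map X u v) ** adjoint_mat (word_map Y u v)))"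
  by (simp add: commw_def wm_append wm_winv)

lemma ee_commw: "unit_m u \<Longrightarrow> unit_m v \<Longrightarrow>
   ee (word_map (commw X Y) u v) \<le> 2 * ee (word_map X u v) * ee (word_map Y u v)"
  by (simp add: wm_commw ee_comm wm_unit)

lemma ee_commw4: assumes "unit_m u" "unit_m v"
  shows "ee (word_map (commw X Y) u v) \<le> 4 * ee (word_map Y u v)"
    "ee (word_map (commw X Y) u v) \<le> 4 * ee (word_map X u v)"
proof -
  note c = ee_commw[OF assms, of X Y]
  have x: "ee (word_map X u v) \<le> 2" "ee (word_map Y u v) \<le> 2"
    using ee_le2 wm_unit assms by blast+
  have g: "ee (word_map X u v) \<ge> 0" "ee (word_map Y u v) \<ge> 0" by (simp_all add: ee_ge0)
  show "ee (word_map (commw X Y) u v) \<le> 4 * ee (word_map Y u v)"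
    using c mult_right_mono[OF x(1) g(2)] by linarith
  show "ee (word_map (commw X Y) u v) \<le> 4 * ee (word_map X u v)"
    using c mult_left_mono[OF x(2) g(1)] by (simp add: mult_ac)
qed



fun PD :: "letter \<Rightarrow> letter \<Rightarrow> nat \<Rightarrow> nat \<Rightarrow> nat \<Rightarrow> letter list \<times> letter list" where
  "PD p q m m' 0 = (replicate m p, replicate m' q)"
| "PD p q m m' (Suc n) = (fst (PD p q m m' n) @ snd (PD p q m m' n),
      winv (fst (PD p q m m' n)) @ winv (snd (PD p q m m' n)))"

definition Zw :: "letter \<Rightarrow> letter \<Rightarrow> nat \<Rightarrow> nat \<Rightarrow> nat \<Rightarrow> letter list" where
  "Zw p q m m' n = fst (PD p q m m' n) @ snd (PD p q m m' n)"

lemma PD_len: "length (fst (PD p q m m' n)) + length (snd (PD p q m m' n)) = 2^n * (m + m')"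
  by (induction n) auto

lemma Zw_len: "length (Zw p q m m' n) = 2^n * (m + m')"
  using PD_len by (simp add: Zw_def)

definition st :: "letter \<Rightarrow> letter \<Rightarrow> nat \<Rightarrow> letter \<times> letter \<times> letter \<times> letter" where
  "st p q n = (if n mod 3 = 0 then (p,p,q,q) else if n mod 3 = 1 then (p,q,fl p, fl q) else (p, fl q, fl q, p))"

lemma PD_inv:
  assumes pq: "fst p \<noteq> fst q" and m: "m \<ge> 1" "m' \<ge> 1"
  shows "fst (PD p q m m' n) \<noteq> [] \<and> snd (PD p q m m' n) \<noteq> [] \<and>
    reduced_word (fst (PD p q m m' n) @ snd (PD p q m m' n)) \<and>
    (hd (fst (PD p q m m' n)), last (fst (PD p q m m' n)), hd (snd (PD p q m m' n)), last (snd (PD p q m m' n))) = st p q n"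
proof (induction n)
  case 0
  have "replicate m p \<noteq> []" "replicate m' q \<noteq> []" using m by auto
  moreover have "\<not> inverse_letters p q" using pq by (simp add: inverse_letters_def)
  ultimately show ?case using m
    by (simp add: st_def red_append red_replicate hd_replicate last_replicate)
next
  case (Suc n)
  define P where "P = fst (PD p q m m' n)"
  define D where "D = snd (PD p q m m' n)"
  have IH: "P \<noteq> []" "D \<noteq> []" "reduced_word (P @ D)" "(hd P, last P, hd D, last D) = st p q n"
    using Suc.IH by (simp_all add: P_def D_def)
  have rP: "reduced_word P" and rD: "reduced_word D" using IH(3) by (simp_all add: red_append)
  have ne: "\<not> inverse_letters (last D) (fl (last P))" "\<not> inverse_letters (fl (hd P)) (fl (last D))"
    "\<not> inverse_letters (last P) (hd D)"
    using IH(4) pq unfolding st_def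
    by (auto simp: inverse_letters_def fl_def prod_eq_iff split: if_splits)
  have eqs: "fst (PD p q m m' (Suc n)) = P @ D" "snd (PD p q m m' (Suc n)) = winv P @ winv D"
    by (simp_all add: P_def D_def)
  have red: "reduced_word ((P @ D) @ (winv P @ winv D))"
    using rP rD ne IH(1,2) red_winv[OF rP] red_winv[OF rD]
    by (simp add: red_append hd_winv last_winv)
  have "(hd (P @ D), last (P @ D), hd (winv P @ winv D), last (winv P @ winv D)) = st p q (Suc n)"
    using IH(1,2,4) unfolding st_def
    by (auto simp: hd_winv last_winv mod_Suc split: if_splits)
  then show ?case using IH(1,2) red unfolding eqs by simp
qed

lemma Zw_props:
  assumes pq: "fst p \<noteq> fst q" and m: "m \<ge> 1" "m' \<ge> 1" and n: "n mod 3 = 2"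
  shows "reduced_word (Zw p q m m' n)" "Zw p q m m' n \<noteq> []" "hd (Zw p q m m' n) = p" "last (Zw p q m m' n) = p"
  using PD_inv[OF pq m, of n] n by (auto simp: Zw_def st_def)

lemma Zw_Suc: "Zw p q m m' (Suc n) = commw (fst (PD p q m m' n)) (snd (PD p q m m' n))"
  by (simp add: Zw_def commw_def)

lemma fst_PD_Suc: "fst (PD p q m m' (Suc n)) = Zw p q m m' n"
  by (simp add: Zw_def)

lemma ee_comm2: assumes X: "unit_m X" and Y: "unit_m Y"
  shows "ee (X ** (Y ** (adjoint_mat X ** adjoint_mat Y))) \<le> 2 * ee (X ** Y) * ee X"
proof -
  have A: "unit_m (X ** Y)" using X Y unit_mul by blast
  have B: "unit_m (adjoint_mat X)" using X unit_adj by blast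
  have eq: "(X ** Y) ** (adjoint_mat X ** (adjoint_mat (X ** Y) ** adjoint_mat (adjoint_mat X)))
      = X ** (Y ** (adjoint_mat X ** adjoint_mat Y))"
  proof -
    have "(X ** Y) ** (adjoint_mat X ** (adjoint_mat (X ** Y) ** adjoint_mat (adjoint_mat X)))
       = X ** (Y ** (adjoint_mat X ** (adjoint_mat Y ** (adjoint_mat X ** X))))"
      by (simp add: adj_mul matrix_mul_assoc)
    then show ?thesis using X by (simp add: unit_m_def)
  qed
  have "ee (X ** (Y ** (adjoint_mat X ** adjoint_mat Y))) \<le> 2 * ee (X ** Y) * ee (adjoint_mat X)"
    using ee_comm[OF A B] unfolding eq .
  also have "\<dots> \<le> 2 * ee (X ** Y) * ee X"
    using ee_adj[OF X] ee_ge0[of "X ** Y"] by (simp add: mult_left_mono)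
  finally show ?thesis .
qed

lemma Zw_rec: assumes "unit_m u" "unit_m v"
  shows "ee (word_map (Zw p q m m' (Suc n)) u v) \<le>
     2 * ee (word_map (Zw p q m m' n) u v) * ee (word_map (fst (PD p q m m' n)) u v)"
proof -
  have "word_map (Zw p q m m' (Suc n)) u v =
     word_map (fst (PD p q m m' n)) u v ** (word_map (snd (PD p q m m' n)) u v **
     (adjoint_mat (word_map (fst (PD p q m m' n)) u v) ** adjoint_mat (word_map (snd (PD p q m m' n)) u v)))"
    unfolding Zw_Suc by (rule wm_commw[OF assms])
  moreover have "word_map (Zw p q m m' n) u v = word_map (fst (PD p q m m' n)) u v ** word_map (snd (PD p q m m' n)) u v"
    by (simp add: Zw_def wm_append)
  ultimately show ?thesis using ee_comm2 wm_unit[OF assms] by metis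
qed

lemma phi_sq: "golden_ratio ^ 2 = golden_ratio + 1"
  unfolding golden_ratio_def by (simp add: power2_eq_square field_simps)
lemma phi_gt1: "golden_ratio > 1"
  unfolding golden_ratio_def by (simp add: real_less_rsqrt)
lemma phi_le2: "golden_ratio \<le> 2"
proof -
  have "sqrt 5 \<le> sqrt (3^2)" by (rule real_sqrt_le_mono) simp
  then show ?thesis unfolding golden_ratio_def by simp
qed

lemma fib_decay:
  fixes g :: "nat \<Rightarrow> real"
  assumes g0: "\<And>n. g n \<ge> 0" and rec: "\<And>n. g (Suc (Suc n)) \<le> g (Suc n) * g n"
    and b0: "g 0 \<le> 1/2" and b1: "g 1 \<le> 1/4"
  shows "g n \<le> (1/2) powr (golden_ratio ^ n)"
proof -
  let ?r = "(1/2::real)"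
  have "g n \<le> ?r powr (golden_ratio ^ n) \<and> g (Suc n) \<le> ?r powr (golden_ratio ^ Suc n)"
  proof (induction n)
    case 0
    have "?r powr 2 \<le> ?r powr golden_ratio"
      using phi_le2 by (intro powr_mono') auto
    moreover have "?r powr 2 = 1/4" using powr_realpow[of ?r 2] by (simp add: power2_eq_square)
    ultimately show ?case using b0 b1 by simp
  next
    case (Suc n)
    have "g (Suc (Suc n)) \<le> g (Suc n) * g n" by (rule rec)
    also have "\<dots> \<le> ?r powr (golden_ratio ^ Suc n) * ?r powr (golden_ratio ^ n)"
      using Suc.IH g0 by (intro mult_mono) auto
    also have "\<dots> = ?r powr (golden_ratio ^ n * (golden_ratio + 1))"
      by (simp add: powr_add[symmetric] algebra_simps)
    also have "\<dots> = ?r powr (golden_ratio ^ Suc (Suc n))"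
      by (simp add: phi_sq[symmetric] power2_eq_square mult_ac)
    finally show ?case using Suc.IH by simp
  qed
  then show ?thesis by simp
qed

lemma Zw_decay:
  assumes u: "unit_m u" and v: "unit_m v"
    and s0: "ee (word_map (fst (PD p q m m' 0)) u v) < 1/16"
    and s1: "ee (word_map (Zw p q m m' 0) u v) < 1/8"
  shows "ee (word_map (Zw p q m m' n) u v) \<le> (1/2) powr (golden_ratio ^ n)"
proof -
  define g where "g n = 2 * ee (word_map (fst (PD p q m m' n)) u v)" for n
  have "g n \<le> (1/2) powr (golden_ratio ^ n)" for n
  proof (rule fib_decay)
    show "g k \<ge> 0" for k by (simp add: g_def ee_ge0)
    show "g (Suc (Suc k)) \<le> g (Suc k) * g k" for k
      using Zw_rec[OF u v, of p q m m' k] unfolding g_def fst_PD_Suc by (simp add: mult_ac)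
    show "g 0 \<le> 1/2" using s0 by (simp add: g_def)
    show "g 1 \<le> 1/4" using s1 by (simp add: g_def fst_PD_Suc[of _ _ _ _ 0, simplified])
  qed
  then have "2 * ee (word_map (Zw p q m m' n) u v) \<le> (1/2) powr (golden_ratio ^ Suc n)"
    using g_def fst_PD_Suc by metis
  also have "\<dots> \<le> (1/2) powr (golden_ratio ^ n)"
    using phi_gt1 by (intro powr_mono') auto
  finally show ?thesis using ee_ge0 by (smt (verit))
qed



fun gp :: "complex^'n^'n \<Rightarrow> nat \<Rightarrow> complex^'n^'n" where
  "gp g 0 = mat 1"
| "gp g (Suc m) = g ** gp g m"

lemma wm_replicate: "word_map (replicate m l) u v = gp (eval_letter u v l) m"
  by (induction m) (simp_all add: wm_Cons)

lemma gp_add: "gp g (i + j) = gp g i ** gp g j"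
  by (induction i) (simp_all add: matrix_mul_assoc)

lemma gp_unit: "unit_m g \<Longrightarrow> unit_m (gp g m)"
  by (induction m) (simp_all add: unit_mul)

lemma norm_unit: fixes A :: "complex^'n^'n" assumes "unit_m A"
  shows "norm A \<le> real CARD('n)"
proof -
  have r: "(norm (A$i))^2 = 1" for i
  proof -
    have "complex_of_real ((norm (A$i))^2) = (\<Sum>j\<in>UNIV. A$i$j * cnj (A$i$j))"
      by (rule norm_sq_cvec)
    also have "\<dots> = (A ** adjoint_mat A)$i$i"
      by (simp add: matrix_matrix_mult_def adjoint_mat_def)
    also have "\<dots> = 1" using assms by (simp add: unit_m_def mat_def)
    finally show ?thesis using of_real_eq_1_iff by blast
  qed
  have "(norm A)^2 = (\<Sum>i\<in>UNIV. (norm (A$i))^2)"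
    unfolding norm_vec_def L2_set_def by (simp add: sum_nonneg)
  also have "\<dots> = real CARD('n)" by (simp add: r)
  finally have "(norm A)^2 = real CARD('n)" .
  moreover have "real CARD('n) \<le> (real CARD('n))^2"
    using finite_UNIV_card_ge_0[where 'a='n] by (simp add: power2_eq_square)
  ultimately have "(norm A)^2 \<le> (real CARD('n))^2" by simp
  then show ?thesis by (rule power2_le_imp_le) simp
qed

lemma norm_le_sum_c: "norm (x::complex^'n) \<le> (\<Sum>i\<in>UNIV. norm (x$i))"
  unfolding norm_vec_def by (rule L2_set_le_sum) simp

lemma opn_le_norm: fixes A :: "complex^'n^'n"
  shows "op_norm A \<le> (real CARD('n))^2 * norm A"
  unfolding op_norm_def
proof (rule onorm_le)
  fix x :: "complex^'n"
  have c: "norm ((A *v x)$i) \<le> real CARD('n) * (norm A * norm x)" for i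
  proof -
    have "norm ((A *v x)$i) = norm (\<Sum>j\<in>UNIV. A$i$j * x$j)"
      by (simp add: matrix_vector_mult_def)
    also have "\<dots> \<le> (\<Sum>j\<in>UNIV. norm (A$i$j * x$j))" by (rule norm_sum)
    also have "\<dots> \<le> (\<Sum>(j::'n)\<in>UNIV. norm A * norm x)"
    proof (rule sum_mono)
      fix j
      have "norm (A$i$j) \<le> norm A" using Finite_Cartesian_Product.norm_nth_le[where x="A$i" and i=j] Finite_Cartesian_Product.norm_nth_le[where x=A and i=i] by linarith
      moreover have "norm (x$j) \<le> norm x" by (rule Finite_Cartesian_Product.norm_nth_le)
      ultimately show "norm (A$i$j * x$j) \<le> norm A * norm x"
        by (simp add: norm_mult mult_mono)
    qed
    also have "\<dots> = real CARD('n) * (norm A * norm x)" by simp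
    finally show ?thesis .
  qed
  have "norm (A *v x) \<le> (\<Sum>i\<in>UNIV. norm ((A *v x)$i))" by (rule norm_le_sum_c)
  also have "\<dots> \<le> (\<Sum>(i::'n)\<in>UNIV. real CARD('n) * (norm A * norm x))"
    by (rule sum_mono) (rule c)
  also have "\<dots> = (real CARD('n))^2 * norm A * norm x" by (simp add: power2_eq_square)
  finally show "norm (A *v x) \<le> (real CARD('n))^2 * norm A * norm x" .
qed

lemma pigeon:
  fixes \<eta> :: real and T :: "'n::finite itself"
  assumes eta: "\<eta> > 0"
  shows "\<exists>M\<ge>1. \<forall>g::complex^'n^'n. unit_m g \<longrightarrow> (\<exists>m. 1 \<le> m \<and> m \<le> M \<and> ee (gp g m) < \<eta>)"
proof -
  define K where "K = real CARD('n)"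
  have K: "K > 0" by (simp add: K_def)
  define \<delta> where "\<delta> = \<eta> / (2 * K^2)"
  have \<delta>: "\<delta> > 0" using K eta by (simp add: \<delta>_def)
  define S where "S = cball (0::complex^'n^'n) K"
  have "compact S" by (simp add: S_def)
  moreover have "\<And>c. c \<in> S \<Longrightarrow> open (ball c \<delta>)" by simp
  moreover have "S \<subseteq> (\<Union>c\<in>S. ball c \<delta>)" using \<delta> by auto
  ultimately obtain C where C: "C \<subseteq> S" "finite C" "S \<subseteq> (\<Union>c\<in>C. ball c \<delta>)"
    by (rule compactE_image)
  have main: "\<exists>m. 1 \<le> m \<and> m \<le> card C + 1 \<and> ee (gp g m) < \<eta>" if g: "unit_m g" for g :: "complex^'n^'n"
  proof -
    have inS: "gp g i \<in> S" for i
      using norm_unit[OF gp_unit[OF g, of i]] by (simp add: S_def K_def)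
    define h where "h i = (SOME c. c \<in> C \<and> gp g i \<in> ball c \<delta>)" for i
    have h: "h i \<in> C \<and> gp g i \<in> ball (h i) \<delta>" for i
    proof -
      have "\<exists>c. c \<in> C \<and> gp g i \<in> ball c \<delta>" using C(3) inS[of i] by blast
      then show ?thesis unfolding h_def by (rule someI_ex)
    qed
    have "h ` {0..card C} \<subseteq> C" using h by blast
    then have "card (h ` {0..card C}) \<le> card C" using C(2) by (simp add: card_mono)
    then have "\<not> inj_on h {0..card C}"
    proof (intro notI)
      assume "card (h ` {0..card C}) \<le> card C" "inj_on h {0..card C}"
      then show False by (simp add: card_image)
    qed
    then obtain i j where ij: "i \<in> {0..card C}" "j \<in> {0..card C}" "i \<noteq> j" "h i = h j"
      unfolding inj_on_def by blast
    obtain a b where ab: "a < b" "b \<le> card C" "h a = h b"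
    proof (cases "i < j")
      case True then show ?thesis using that[of i j] ij by auto
    next
      case False then show ?thesis using that[of j i] ij by auto
    qed
    have d: "dist (gp g a) (gp g b) < 2 * \<delta>"
    proof -
      have "dist (gp g a) (h a) < \<delta>" using h[of a] by (simp add: dist_commute)
      moreover have "dist (h a) (gp g b) < \<delta>" using h[of b] ab(3) by simp
      ultimately show ?thesis using dist_triangle[of "gp g a" "gp g b" "h a"] by linarith
    qed
    define m where "m = b - a"
    have gb: "gp g b = gp g a ** gp g m" using ab gp_add[of g a m] by (simp add: m_def)
    have ga: "unit_m (gp g a)" by (rule gp_unit[OF g])
    have eq: "mat 1 - gp g m = adjoint_mat (gp g a) ** (gp g a - gp g b)"
      using ga by (simp add: gb mm_diff_l matrix_mul_assoc unit_m_def)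
    have "ee (gp g m) \<le> op_norm (adjoint_mat (gp g a)) * op_norm (gp g a - gp g b)"
      unfolding ee_def eq by (rule opn_mul)
    also have "\<dots> \<le> 1 * op_norm (gp g a - gp g b)"
      by (rule mult_right_mono) (use opn_unit[OF unit_adj[OF ga]] opn_ge0 in auto)
    also have "\<dots> \<le> K^2 * norm (gp g a - gp g b)" using opn_le_norm by (simp add: K_def)
    also have "\<dots> < K^2 * (2 * \<delta>)" using d K by (simp add: dist_norm)
    also have "\<dots> = \<eta>" using K by (simp add: \<delta>_def)
    finally have fin: "ee (gp g m) < \<eta>" .
    have "1 \<le> m" "m \<le> card C + 1" using ab by (auto simp: m_def)
    then show ?thesis using fin by blast
  qed
  show ?thesis using main by (intro exI[of _ "card C + 1"]) auto
qed



definition la :: letter where "la = (False, False)"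
definition lb :: letter where "lb = (True, False)"
definition lA :: letter where "lA = (False, True)"

definition Za :: "nat \<Rightarrow> nat \<times> nat \<Rightarrow> letter list" where
  "Za N j = Zw la lb (fst j) (snd j) N"
definition Zb :: "nat \<Rightarrow> nat \<times> nat \<Rightarrow> letter list" where
  "Zb N j = Zw lb la (snd j) (fst j) N"
definition block :: "nat \<Rightarrow> nat \<times> nat \<Rightarrow> letter list \<Rightarrow> letter list" where
  "block N j Y = commw (Za N j) (commw (Za N j) (commw (Zb N j) (commw (Zb N j) Y)))"
definition nestw :: "nat \<Rightarrow> (nat \<times> nat) list \<Rightarrow> letter list" where
  "nestw N js = foldr (block N) js [la, lb, lA]"

lemma nest_red:
  assumes N: "N mod 3 = 2" and js: "\<forall>j\<in>set js. fst j \<ge> 1 \<and> snd j \<ge> 1"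
  shows "reduced_word (nestw N js) \<and> nestw N js \<noteq> [] \<and> hd (nestw N js) = la \<and> last (nestw N js) = lA"
  using js
proof (induction js)
  case Nil
  show ?case by (simp add: nestw_def red_Cons la_def lb_def lA_def inverse_letters_def)
next
  case (Cons j js)
  define Y where "Y = nestw N js"
  have Y: "reduced_word Y" "Y \<noteq> []" "hd Y = la" "last Y = lA" using Cons by (auto simp: Y_def)
  have j: "fst j \<ge> 1" "snd j \<ge> 1" using Cons.prems by auto
  have pa: "fst la \<noteq> fst lb" "fst lb \<noteq> fst la" by (simp_all add: la_def lb_def)
  note A = Zw_props[OF pa(1) j N, folded Za_def]
  note B = Zw_props[OF pa(2) j(2) j(1) N, folded Zb_def]
  note lets = la_def lb_def lA_def inverse_letters_def fl_def
  note c1 = red_commw[OF B(1) Y(1) B(2) Y(2)]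
  have c1': "reduced_word (commw (Zb N j) Y)" "commw (Zb N j) Y \<noteq> []"
     "hd (commw (Zb N j) Y) = lb" "last (commw (Zb N j) Y) = lA"
    using c1 B Y by (simp_all add: lets)
  note c2 = red_commw[OF B(1) c1'(1) B(2) c1'(2)]
  define Y2 where "Y2 = commw (Zb N j) (commw (Zb N j) Y)"
  have c2': "reduced_word Y2" "Y2 \<noteq> []" "hd Y2 = lb" "last Y2 = fl lb"
    using c2 B c1' unfolding Y2_def by (simp_all add: lets)
  note c3 = red_commw[OF A(1) c2'(1) A(2) c2'(2)]
  define Y3 where "Y3 = commw (Za N j) Y2"
  have c3': "reduced_word Y3" "Y3 \<noteq> []" "hd Y3 = la" "last Y3 = fl lb"
    using c3 A c2' unfolding Y3_def by (simp_all add: lets)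
  note c4 = red_commw[OF A(1) c3'(1) A(2) c3'(2)]
  have "nestw N (j # js) = commw (Za N j) Y3"
    by (simp add: nestw_def block_def Y_def Y2_def Y3_def)
  then show ?case using c4 A c3' by (simp add: lets)
qed

lemma nest_ee:
  assumes u: "unit_m u" and v: "unit_m v" and j: "j \<in> set js"
  shows "ee (word_map (nestw N js) u v) \<le> 4 ^ (4 * length js) * ee (word_map (Za N j) u v)"
  using j
proof (induction js)
  case Nil then show ?case by simp
next
  case (Cons k js)
  note c4 = ee_commw4[OF u v]
  define Y where "Y = nestw N js"
  have eqn: "nestw N (k # js) = block N k Y" by (simp add: nestw_def Y_def)
  have g: "ee (word_map (Za N j) u v) \<ge> 0" by (rule ee_ge0)
  show ?case
  proof (cases "j = k")
    case True
    have "ee (word_map (block N k Y) u v) \<le> 4 * ee (word_map (Za N j) u v)"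
      unfolding block_def True by (rule c4(2))
    also have "\<dots> \<le> 4 ^ (4 * length (k # js)) * ee (word_map (Za N j) u v)"
    proof (rule mult_right_mono[OF _ g])
      have "(4::real) ^ 1 \<le> 4 ^ (4 * length (k # js))" by (rule power_increasing) auto
      then show "(4::real) \<le> 4 ^ (4 * length (k # js))" by simp
    qed
    finally show ?thesis unfolding eqn .
  next
    case False
    then have jj: "j \<in> set js" using Cons.prems by simp
    have "ee (word_map (block N k Y) u v) \<le> 4 * (4 * (4 * (4 * ee (word_map Y u v))))"
    proof -
      have e1: "ee (word_map (commw (Zb N k) Y) u v) \<le> 4 * ee (word_map Y u v)" by (rule c4(1))
      have e2: "ee (word_map (commw (Zb N k) (commw (Zb N k) Y)) u v) \<le> 4 * ee (word_map (commw (Zb N k) Y) u v)" by (rule c4(1))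
      have e3: "ee (word_map (commw (Za N k) (commw (Zb N k) (commw (Zb N k) Y))) u v) \<le> 4 * ee (word_map (commw (Zb N k) (commw (Zb N k) Y)) u v)" by (rule c4(1))
      have e4: "ee (word_map (block N k Y) u v) \<le> 4 * ee (word_map (commw (Za N k) (commw (Zb N k) (commw (Zb N k) Y))) u v)"
        unfolding block_def by (rule c4(1))
      show ?thesis using e1 e2 e3 e4 by linarith
    qed
    also have "\<dots> \<le> 4 * (4 * (4 * (4 * (4 ^ (4 * length js) * ee (word_map (Za N j) u v)))))"
      using Cons.IH[OF jj] by (simp add: Y_def)
    also have "\<dots> = 4 ^ (4 * length (k # js)) * ee (word_map (Za N j) u v)"
      by (simp add: power_add)
    finally show ?thesis unfolding eqn .
  qed
qed

lemma nest_len: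
  assumes S: "\<forall>j\<in>set js. length (Za N j) \<le> S \<and> length (Zb N j) \<le> S"
  shows "length (nestw N js) \<le> 4 ^ (4 * length js) * (3 + S)"
  using S
proof (induction js)
  case Nil then show ?case by (simp add: nestw_def)
next
  case (Cons k js)
  have k: "length (Za N k) \<le> S" "length (Zb N k) \<le> S" using Cons.prems by auto
  have IH: "length (nestw N js) \<le> 4 ^ (4 * length js) * (3 + S)" using Cons by simp
  have p: "(1::nat) \<le> 4 ^ (4 * length js)" by simp
  have "length (nestw N (k # js)) = 6 * length (Za N k) + 24 * length (Zb N k) + 16 * length (nestw N js)"
    by (simp add: nestw_def block_def length_commw)
  also have "\<dots> \<le> 30 * S + 16 * (4 ^ (4 * length js) * (3 + S))" using k IH by linarith
  also have "\<dots> \<le> 4 ^ (4 * length (k # js)) * (3 + S)"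
  proof -
    have "1 * (3 + S) \<le> 4 ^ (4 * length js) * (3 + S)" by (rule mult_le_mono1[OF p])
    then have h: "3 + S \<le> 4 ^ (4 * length js) * (3 + S)" by simp
    have aux: "\<And>X::nat. 3 + S \<le> X \<Longrightarrow> 30 * S \<le> 240 * X" by linarith
    have "30 * S \<le> 240 * (4 ^ (4 * length js) * (3 + S))" by (rule aux[OF h])
    then show ?thesis by (simp add: power_add)
  qed
  finally show ?case .
qed



lemma phi_N: "golden_ratio ^ N \<ge> real N / 2"
proof -
  have s: "sqrt 5 \<ge> 2"
  proof -
    have "sqrt (2^2) \<le> sqrt 5" by (rule real_sqrt_le_mono) simp
    then show ?thesis by simp
  qed
  have "1 + real N * (golden_ratio - 1) \<le> (1 + (golden_ratio - 1)) ^ N"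
    by (rule Bernoulli_inequality) (use phi_gt1 in simp)
  moreover have "golden_ratio - 1 \<ge> 1/2" using s by (simp add: golden_ratio_def)
  ultimately have "real N * (1/2) \<le> real N * (golden_ratio - 1)"
    by (intro mult_left_mono) auto
  then have "real N / 2 \<le> 1 + real N * (golden_ratio - 1)" by simp
  also have "\<dots> \<le> golden_ratio ^ N" using \<open>1 + real N * (golden_ratio - 1) \<le> _\<close> by simp
  finally show ?thesis .
qed

lemma half_powr: "(1/2::real) powr y = exp (- (ln 2 / 2) * (2 * y))"
  by (simp add: powr_def ln_div)

lemma Q_bound:
  fixes K :: nat and x :: real
  assumes "x \<ge> 16 * real K"
  shows "4 ^ (4 * K) * (1/2) powr x \<le> (1/2::real) powr (x / 2)"
proof -
  have "(1/2::real) powr x = (1/2) powr (x - 8 * real K) * (1/2) powr (8 * real K)"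
    by (simp add: powr_add[symmetric])
  also have "(1/2::real) powr (8 * real K) = (1/2) ^ (8 * K)"
    using powr_realpow[of "1/2::real" "8 * K"] by simp
  finally have "4 ^ (4 * K) * (1/2::real) powr x = (1/2) powr (x - 8 * real K) * (4 ^ (4 * K) * (1/2) ^ (8 * K))"
    by simp
  also have "(4::real) ^ (4 * K) * (1/2) ^ (8 * K) = 1"
  proof -
    have "(4::real) ^ (4 * K) = (2 ^ 2) ^ (4 * K)" by simp
    also have "\<dots> = 2 ^ (8 * K)" by (simp only: power_mult[symmetric]) simp
    finally have "(4::real) ^ (4 * K) = 2 ^ (8 * K)" .
    then show ?thesis by (simp add: power_mult_distrib[symmetric])
  qed
  also have "(1/2::real) powr (x - 8 * real K) * 1 \<le> (1/2) powr (x / 2)"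
  proof -
    have "x / 2 \<le> x - 8 * real K" using assms by simp
    then show ?thesis by (simp add: powr_mono')
  qed
  finally show ?thesis .
qed



lemma eval_la: "eval_letter u v la = u" by (simp add: eval_letter_def la_def)
lemma eval_lb: "eval_letter u v lb = v" by (simp add: eval_letter_def lb_def)

lemma Za_small:
  assumes u: "unit_m u" and v: "unit_m v"
    and m: "ee (gp u m) < 1/16" and m': "ee (gp v m') < 1/16"
  shows "ee (word_map (Za N (m, m')) u v) \<le> (1/2) powr (golden_ratio ^ N)"
  unfolding Za_def fst_conv snd_conv
proof (rule Zw_decay[OF u v])
  show "ee (word_map (fst (PD la lb m m' 0)) u v) < 1/16"
    using m by (simp add: wm_replicate eval_la)
  have "word_map (Zw la lb m m' 0) u v = gp u m ** gp v m'"
    by (simp add: Zw_def wm_append wm_replicate eval_la eval_lb)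
  moreover have "ee (gp u m ** gp v m') \<le> ee (gp u m) + ee (gp v m')"
    by (rule ee_mul) (simp_all add: gp_unit u v)
  ultimately show "ee (word_map (Zw la lb m m' 0) u v) < 1/8" using m m' by simp
qed

lemma mat1_SU: "mat 1 \<in> SU T" by (simp add: SU_def det_I)

theorem theorem3p1:
  fixes T :: "'n::finite itself"
  shows "\<exists>ws C. almost_law T ws \<and> C > 0 \<and>
     (\<forall>n. L_SU T (ws n) \<le> exp (- C * real (word_length (ws n)) powr log 2 golden_ratio))"
proof -
  obtain M where M: "M \<ge> 1"
    and Mp: "\<And>g::complex^'n^'n. unit_m g \<Longrightarrow> \<exists>m. 1 \<le> m \<and> m \<le> M \<and> ee (gp g m) < 1/16"
    using pigeon[of "1/16"] by auto
  define js where "js = List.product [1..<M+1] [1..<M+1]"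
  define K where "K = length js"
  define Q :: real where "Q = 4 ^ (4 * K)"
  define t0 where "t0 = 16 * K + 1"
  define N where "N t = 3 * (t + t0) + 2" for t
  define ws where "ws t = nestw (N t) js" for t
  define D :: real where "D = Q * (3 + 2 * real M)"
  define a where "a = log 2 golden_ratio"
  define C where "C = ln 2 / (2 * D powr a)"
  have Qpos: "Q \<ge> 1" by (simp add: Q_def)
  have Dpos: "D > 0" using Qpos by (simp add: D_def)
  have apos: "a > 0" using phi_gt1 by (simp add: a_def)
  have Cpos: "C > 0" using Dpos by (simp add: C_def)
  have js_ok: "\<forall>j\<in>set js. fst j \<ge> 1 \<and> snd j \<ge> 1" by (auto simp: js_def)
  have Nmod: "N t mod 3 = 2" for t unfolding N_def by presburger
  have est: "ee (word_map (ws t) u v) \<le> Q * (1/2) powr (golden_ratio ^ N t)"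
    if uv: "u \<in> SU T" "v \<in> SU T" for u v t
  proof -
    have u: "unit_m u" and v: "unit_m v" using uv SU_unit by blast+
    obtain m where m: "1 \<le> m" "m \<le> M" "ee (gp u m) < 1/16" using Mp[OF u] by blast
    obtain m' where m': "1 \<le> m'" "m' \<le> M" "ee (gp v m') < 1/16" using Mp[OF v] by blast
    have j: "(m, m') \<in> set js" using m m' by (auto simp: js_def)
    have "ee (word_map (ws t) u v) \<le> 4 ^ (4 * length js) * ee (word_map (Za (N t) (m, m')) u v)"
      unfolding ws_def by (rule nest_ee[OF u v j])
    also have "\<dots> \<le> Q * (1/2) powr (golden_ratio ^ N t)"
      unfolding Q_def K_def by (rule mult_left_mono[OF Za_small[OF u v m(3) m'(3)]]) simp
    finally show ?thesis .
  qed
  have xN: "golden_ratio ^ N t \<ge> 16 * real K" "golden_ratio ^ N t \<ge> 3 * real t / 2" for t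
  proof -
    have "golden_ratio ^ N t \<ge> real (N t) / 2" by (rule phi_N)
    moreover have "real (N t) \<ge> 3 * real t + 48 * real K" by (simp add: N_def t0_def)
    ultimately show "golden_ratio ^ N t \<ge> 16 * real K" "golden_ratio ^ N t \<ge> 3 * real t / 2" by simp_all
  qed
  have est2: "ee (word_map (ws t) u v) \<le> (1/2) powr (golden_ratio ^ N t / 2)"
    if uv: "u \<in> SU T" "v \<in> SU T" for u v t
    using est[OF uv, of t] Q_bound[OF xN(1)[of t]] unfolding Q_def by linarith
  have len: "real (length (ws t)) \<le> D * 2 ^ N t" for t
  proof -
    have S: "\<forall>j\<in>set js. length (Za (N t) j) \<le> 2 ^ N t * (2 * M) \<and> length (Zb (N t) j) \<le> 2 ^ N t * (2 * M)"
      by (auto simp: js_def Za_def Zb_def Zw_len)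
    have "length (ws t) \<le> 4 ^ (4 * K) * (3 + 2 ^ N t * (2 * M))"
      unfolding ws_def K_def by (rule nest_len[OF S])
    also have "\<dots> \<le> 4 ^ (4 * K) * ((3 + 2 * M) * 2 ^ N t)"
    proof -
      have "(1::nat) \<le> 2 ^ N t" by simp
      then have "3 + 2 ^ N t * (2 * M) \<le> (3 + 2 * M) * 2 ^ N t" by (simp add: algebra_simps)
      then show ?thesis by (rule mult_le_mono2)
    qed
    finally have "real (length (ws t)) \<le> real (4 ^ (4 * K) * ((3 + 2 * M) * 2 ^ N t))"
      by (simp only: of_nat_le_iff)
    then show ?thesis by (simp add: D_def Q_def mult_ac)
  qed
  have rate: "L_SU T (ws t) \<le> exp (- C * real (word_length (ws t)) powr a)" for t
  proof -
    define x where "x = golden_ratio ^ N t"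
    have xpos: "x > 0" using phi_gt1 by (simp add: x_def)
    have l: "real (length (ws t)) powr a \<le> D powr a * x"
    proof -
      have "real (length (ws t)) powr a \<le> (D * 2 ^ N t) powr a"
        by (rule powr_mono2) (use apos len in auto)
      also have "\<dots> = D powr a * (2 ^ N t) powr a" using Dpos by (simp add: powr_mult)
      also have "(2 ^ N t :: real) powr a = x"
      proof -
        have "(2 ^ N t :: real) powr a = (2 powr real (N t)) powr a" by (simp add: powr_realpow)
        also have "\<dots> = (2 powr a) powr real (N t)" by (simp add: powr_powr mult.commute)
        also have "2 powr a = golden_ratio" using phi_gt1 by (simp add: a_def)
        also have "golden_ratio powr real (N t) = x" using phi_gt1 by (simp add: x_def powr_realpow)
        finally show ?thesis .
      qed
      finally show ?thesis .
    qed
    have b: "dSU (mat 1) (word_map (ws t) (fst p) (snd p)) \<le> exp (- C * real (word_length (ws t)) powr a)"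
      if p: "p \<in> SU T \<times> SU T" for p
    proof -
      have "dSU (mat 1) (word_map (ws t) (fst p) (snd p)) \<le> (1/2) powr (x / 2)"
        using est2[of "fst p" "snd p" t] p unfolding dSU_def ee_def x_def by auto
      also have "\<dots> = exp (- (ln 2 / 2) * x)" by (simp add: half_powr)
      also have "ln 2 / 2 = C * D powr a" using Dpos by (simp add: C_def)
      also have "exp (- (C * D powr a) * x) \<le> exp (- C * real (word_length (ws t)) powr a)"
        using l Cpos by (simp add: word_length_def mult.assoc mult_left_mono)
      finally show ?thesis .
    qed
    show ?thesis unfolding L_SU_def
      by (rule cSUP_least) (use b mat1_SU in auto)
  qed
  have al: "almost_law T ws"
    unfolding almost_law_def
  proof (intro conjI allI impI)
    show "reduced_word (ws n)" "ws n \<noteq> []" for n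
      using nest_red[OF Nmod js_ok] by (simp_all add: ws_def)
    fix \<epsilon> :: real assume e: "\<epsilon> > 0"
    obtain T0 where T0: "(1/2::real) ^ T0 < \<epsilon>" using real_arch_pow_inv[OF e, of "1/2"] by auto
    show "\<exists>N0. \<forall>n\<ge>N0. \<forall>u\<in>SU T. \<forall>v\<in>SU T. dSU (mat 1) (word_map (ws n) u v) < \<epsilon>"
    proof (intro exI[of _ "2 * T0"] allI impI ballI)
      fix n u v assume n: "n \<ge> 2 * T0" and uv: "u \<in> SU T" "v \<in> SU T"
      have "real T0 \<le> golden_ratio ^ N n / 2" using xN(2)[of n] n by simp
      then have "(1/2::real) powr (golden_ratio ^ N n / 2) \<le> (1/2) powr real T0"
        by (intro powr_mono') auto
      also have "\<dots> = (1/2) ^ T0" by (simp add: powr_realpow)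
      finally show "dSU (mat 1) (word_map (ws n) u v) < \<epsilon>"
        using est2[OF uv, of n] T0 unfolding dSU_def ee_def by linarith
    qed
  qed
  show ?thesis using al Cpos rate unfolding a_def by blast
qed


end
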